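(* For every $n\ge 1$, the path $P_n$ on $n$ vertices satisfies $\phi(P_n)<0.81\cdot 6^{n/4}$.
   Context: A subset $F$ of vertices of a graph $G$ is a dissociation set if $G[F]$ has maximum degree at most $1$; a maximal dissociation set is one not properly contained in another dissociation set; $\phi(G)$ is the number of maximal dissociation sets of $G$. *)

theory Defs
  imports Complex_Main
begin

text \<open>A simple graph is given by a vertex set V and a symmetric irreflexive
adjacency relation E (only used on V).\<close>

definition dissociation_set :: "'a set \<Rightarrow> ('a \<Rightarrow> 'a \<Rightarrow> bool) \<Rightarrow> 'a set \<Rightarrow> bool" where
  "dissociation_set V E F \<longleftrightarrow> F \<subseteq> V \<and> (\<forall>v\<in>F. card {u\<in>F. E v u} \<le> 1)"

definition maximal_dissociation_set :: "'a set \<Rightarrow> ('a \<Rightarrow> 'a \<Rightarrow> bool) \<Rightarrow> 'a set \<Rightarrow> bool" where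
  "maximal_dissociation_set V E F \<longleftrightarrow>
     dissociation_set V E F \<and> (\<forall>F'. dissociation_set V E F' \<and> F \<subseteq> F' \<longrightarrow> F' = F)"

definition num_max_dissociation_sets :: "'a set \<Rightarrow> ('a \<Rightarrow> 'a \<Rightarrow> bool) \<Rightarrow> nat" where
  "num_max_dissociation_sets V E = card {F. maximal_dissociation_set V E F}"

definition path_vertices :: "nat \<Rightarrow> nat set" where
  "path_vertices n = {0..<n}"

definition path_adj :: "nat \<Rightarrow> nat \<Rightarrow> bool" where
  "path_adj i j \<longleftrightarrow> i = Suc j \<or> j = Suc i"

end

theory Submission
  imports Defs
begin

definition nt :: "nat set \<Rightarrow> bool" where
  "nt F \<longleftrightarrow> (\<forall>w. \<not>(w\<in>F \<and> Suc w\<in>F \<and> Suc(Suc w)\<in>F))"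

definition blocked :: "nat set \<Rightarrow> nat \<Rightarrow> bool" where
  "blocked F v \<longleftrightarrow> (Suc v\<in>F \<and> Suc(Suc v)\<in>F) \<or> (1\<le>v \<and> v-1\<in>F \<and> Suc v\<in>F) \<or> (2\<le>v \<and> v-1\<in>F \<and> v-2\<in>F)"

definition mx :: "nat \<Rightarrow> nat set \<Rightarrow> bool" where
  "mx n F \<longleftrightarrow> F \<subseteq> {0..<n} \<and> nt F \<and> (\<forall>v<n. v\<notin>F \<longrightarrow> blocked F v)"

lemma dis_iff: "dissociation_set {0..<n} path_adj F \<longleftrightarrow> F \<subseteq> {0..<n} \<and> nt F"
proof
  assume d: "dissociation_set {0..<n} path_adj F"
  hence sub: "F \<subseteq> {0..<n}" and c: "\<forall>v\<in>F. card {u\<in>F. path_adj v u} \<le> 1"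
    by (auto simp: dissociation_set_def path_vertices_def)
  have fin: "finite F" using sub finite_subset by blast
  have "nt F"
    unfolding nt_def
  proof (intro allI notI)
    fix w assume h: "w\<in>F \<and> Suc w\<in>F \<and> Suc(Suc w)\<in>F"
    have "{w, Suc(Suc w)} \<subseteq> {u\<in>F. path_adj (Suc w) u}" using h by (auto simp: path_adj_def)
    hence "card {w, Suc(Suc w)} \<le> card {u\<in>F. path_adj (Suc w) u}"
      by (intro card_mono) (auto simp: fin)
    moreover have "card {w, Suc(Suc w)} = 2" by simp
    ultimately show False using c h by force
  qed
  thus "F \<subseteq> {0..<n} \<and> nt F" using sub by blast
next
  assume h: "F \<subseteq> {0..<n} \<and> nt F"
  have fin: "finite F" using h finite_subset by blast
  have "card {u\<in>F. path_adj v u} \<le> 1" if v: "v\<in>F" for v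
  proof (cases "Suc v \<in> F")
    case True
    have "{u\<in>F. path_adj v u} \<subseteq> {Suc v}"
    proof
      fix u assume u: "u \<in> {u\<in>F. path_adj v u}"
      show "u \<in> {Suc v}"
      proof (rule ccontr)
        assume "u \<notin> {Suc v}"
        hence "v = Suc u" using u by (auto simp: path_adj_def)
        thus False using h u True v unfolding nt_def by blast
      qed
    qed
    hence "card {u\<in>F. path_adj v u} \<le> card {Suc v}" by (intro card_mono) auto
    thus ?thesis by simp
  next
    case False
    have "{u\<in>F. path_adj v u} \<subseteq> {v - 1}"
      using False by (auto simp: path_adj_def)
    hence "card {u\<in>F. path_adj v u} \<le> card {v - 1}" by (intro card_mono) auto
    thus ?thesis by simp
  qed
  thus "dissociation_set {0..<n} path_adj F" using h by (auto simp: dissociation_set_def)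
qed

lemma nt_mono: "nt F \<Longrightarrow> G \<subseteq> F \<Longrightarrow> nt G"
  unfolding nt_def by blast

lemma nt_insert: "nt F \<Longrightarrow> v \<notin> F \<Longrightarrow> (\<not> nt (insert v F) \<longleftrightarrow> blocked F v)"
proof
  assume a: "nt F" "v \<notin> F" "\<not> nt (insert v F)"
  then obtain w where w: "w\<in>insert v F" "Suc w\<in>insert v F" "Suc(Suc w)\<in>insert v F"
    unfolding nt_def by blast
  have "w = v \<or> Suc w = v \<or> Suc (Suc w) = v" using a(1) w unfolding nt_def by blast
  thus "blocked F v"
  proof (elim disjE)
    assume "w = v" thus ?thesis using w a(2) unfolding blocked_def by auto
  next
    assume e: "Suc w = v"
    hence "w = v - 1" by auto
    thus ?thesis using w a(2) e unfolding blocked_def by auto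
  next
    assume e: "Suc (Suc w) = v"
    hence "w = v - 2" "Suc w = v - 1" by auto
    thus ?thesis using w a(2) e unfolding blocked_def by auto
  qed
next
  assume b: "blocked F v"
  show "\<not> nt (insert v F)"
    unfolding nt_def
  proof
    assume n: "\<forall>w. \<not>(w\<in>insert v F \<and> Suc w\<in>insert v F \<and> Suc(Suc w)\<in>insert v F)"
    from b show False unfolding blocked_def
    proof (elim disjE conjE)
      assume "Suc v\<in>F" "Suc(Suc v)\<in>F" thus False using n by blast
    next
      assume "1\<le>v" "v-1\<in>F" "Suc v\<in>F"
      moreover have "Suc (v-1) = v" using \<open>1\<le>v\<close> by simp
      ultimately show False using n[rule_format, of "v-1"] by auto
    next
      assume "2\<le>v" "v-1\<in>F" "v-2\<in>F"
      moreover have "Suc (v-2) = v-1" "Suc (Suc (v-2)) = v" using \<open>2\<le>v\<close> by auto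
      ultimately show False using n[rule_format, of "v-2"] by auto
    qed
  qed
qed

lemma max_iff: "maximal_dissociation_set {0..<n} path_adj F \<longleftrightarrow> mx n F"
proof
  assume m: "maximal_dissociation_set {0..<n} path_adj F"
  hence d: "F \<subseteq> {0..<n}" "nt F" by (auto simp: maximal_dissociation_set_def dis_iff)
  have "blocked F v" if "v<n" "v\<notin>F" for v
  proof (rule ccontr)
    assume "\<not> blocked F v"
    hence "nt (insert v F)" using nt_insert[OF d(2) that(2)] by blast
    hence "dissociation_set {0..<n} path_adj (insert v F)" using d that by (auto simp: dis_iff)
    hence "insert v F = F" using m by (auto simp: maximal_dissociation_set_def)
    thus False using that by blast
  qed
  thus "mx n F" using d by (auto simp: mx_def)
next
  assume m: "mx n F"
  have "F' = F" if dd: "dissociation_set {0..<n} path_adj F'" and ss: "F \<subseteq> F'" for F'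
  proof (rule ccontr)
    assume "F' \<noteq> F"
    then obtain v where v: "v \<in> F'" "v \<notin> F" using ss by blast
    have "F' \<subseteq> {0..<n}" "nt F'" using dd by (auto simp: dis_iff)
    hence "v < n" "nt (insert v F)" using v ss nt_mono[of F' "insert v F"] by auto
    moreover have "blocked F v" using m \<open>v<n\<close> v(2) by (auto simp: mx_def)
    ultimately show False using nt_insert[of F v] m v(2) by (auto simp: mx_def)
  qed
  thus "maximal_dissociation_set {0..<n} path_adj F" using m
    by (auto simp: maximal_dissociation_set_def dis_iff mx_def)
qed


definition MS :: "nat \<Rightarrow> nat set set" where "MS n = {F. mx n F}"
definition S0 where "S0 n = {F\<in>MS n. n-1 \<notin> F}"
definition S1 where "S1 n = {F\<in>MS n. n-1 \<in> F \<and> n-2 \<notin> F}"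
definition S2 where "S2 n = {F\<in>MS n. n-1 \<in> F \<and> n-2 \<in> F}"

lemma MS_fin: "finite (MS n)"
proof -
  have "MS n \<subseteq> Pow {0..<n}" by (auto simp: MS_def mx_def)
  thus ?thesis by (rule finite_subset) simp
qed

lemma MS_split: "n \<ge> 1 \<Longrightarrow> card (MS n) \<le> card (S0 n) + card (S1 n) + card (S2 n)"
proof -
  have "MS n = S0 n \<union> S1 n \<union> S2 n" by (auto simp: S0_def S1_def S2_def)
  hence "card (MS n) \<le> card (S0 n \<union> S1 n) + card (S2 n)" by (metis card_Un_le)
  also have "\<dots> \<le> card (S0 n) + card (S1 n) + card (S2 n)" using card_Un_le[of "S0 n" "S1 n"] by simp
  finally show ?thesis .
qed

lemma MS0: "card (MS 0) \<le> 1"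
proof -
  have "MS 0 \<subseteq> {{}}" by (auto simp: MS_def mx_def)
  hence "card (MS 0) \<le> card {{}::nat set}" by (intro card_mono) auto
  thus ?thesis by simp
qed

lemma S0_small: "n \<ge> 1 \<Longrightarrow> n < 3 \<Longrightarrow> S0 n = {}"
proof (rule ccontr)
  assume n1: "n \<ge> 1" and n: "n < 3" and "S0 n \<noteq> {}"
  then obtain F where F: "mx n F" "n - 1 \<notin> F" by (auto simp: S0_def MS_def)
  show False
  proof (cases "n = 0")
    case True thus False using n1 by simp
  next
    case False
    hence "blocked F (n-1)" using F by (auto simp: mx_def)
    moreover have "n \<notin> F" "Suc n \<notin> F" using F by (auto simp: mx_def)
    ultimately show False using n False by (auto simp: blocked_def)
  qed
qed

lemma S0_sub: "n \<ge> 3 \<Longrightarrow> S0 n \<subseteq> S2 (n-1)"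
proof
  fix F assume n: "n \<ge> 3" and "F \<in> S0 n"
  hence F: "mx n F" "n - 1 \<notin> F" by (auto simp: S0_def MS_def)
  have b: "blocked F (n-1)" using F n by (auto simp: mx_def)
  have "n \<notin> F" using F by (auto simp: mx_def)
  hence "n-2 \<in> F" "n-3 \<in> F" using b n by (auto simp: blocked_def numeral_eq_Suc)
  moreover have "F \<subseteq> {0..<n-1}"
  proof
    fix x assume "x\<in>F" hence "x<n" "x\<noteq>n-1" using F by (auto simp: mx_def)
    thus "x\<in>{0..<n-1}" by auto
  qed
  moreover have "\<forall>v<n-1. v\<notin>F \<longrightarrow> blocked F v" using F by (auto simp: mx_def)
  ultimately show "F \<in> S2 (n-1)" using F n
    by (auto simp: S2_def MS_def mx_def numeral_eq_Suc)
qed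


lemma S1_small: "n \<ge> 1 \<Longrightarrow> n < 3 \<Longrightarrow> S1 n = {}"
proof (rule ccontr)
  assume n1: "n \<ge> 1" and n: "n < 3" and "S1 n \<noteq> {}"
  then obtain F where F: "mx n F" "n - 1 \<in> F" "n - 2 \<notin> F" by (auto simp: S1_def MS_def)
  have "n = 2" using F n n1 by (cases "n = 1") auto
  hence "blocked F 0" "Suc 0 \<in> F" "Suc (Suc 0) \<notin> F" "0 \<notin> F" using F by (auto simp: mx_def)
  thus False by (auto simp: blocked_def)
qed

lemma S1_card: assumes n: "n \<ge> 3" shows "card (S1 n) \<le> card (S1 (n-2)) + card (S2 (n-2))"
proof -
  let ?f = "\<lambda>F. F - {n-1}"
  have inj: "inj_on ?f (S1 n)"
    by (rule inj_onI) (auto simp: S1_def)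
  have img: "?f ` S1 n \<subseteq> S1 (n-2) \<union> S2 (n-2)"
  proof
    fix G assume "G \<in> ?f ` S1 n"
    then obtain F where G: "G = F - {n-1}" and FS: "F \<in> S1 n" by blast
    hence F: "mx n F" "n - 1 \<in> F" "n - 2 \<notin> F" by (auto simp: S1_def MS_def)
    have nF: "n \<notin> F" using F by (auto simp: mx_def)
    have b: "blocked F (n-2)" using F n by (auto simp: mx_def)
    have n3: "n - 3 \<in> F"
    proof -
      have e: "n - 2 - 1 = n - 3" "n - 2 - 2 = n - 4" "Suc (n-2) = n-1" "Suc (Suc (n-2)) = n" using n by auto
      show ?thesis using b nF n unfolding blocked_def e by auto
    qed
    have sub: "G \<subseteq> {0..<n-2}"
    proof
      fix x assume "x\<in>G" hence "x<n" "x\<noteq>n-1" "x \<noteq> n-2" using F G by (auto simp: mx_def)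
      thus "x\<in>{0..<n-2}" by auto
    qed
    have ntG: "nt G" using F G nt_mono by (auto simp: mx_def)
    have bl: "blocked G v" if v: "v < n-2" "v \<notin> G" for v
    proof -
      have "v \<notin> F" using v G n by auto
      hence "blocked F v" using F v by (auto simp: mx_def)
      moreover have "Suc v \<noteq> n-1" "v - 1 \<noteq> n - 1" "v - 2 \<noteq> n - 1" using v n by auto
      moreover have "Suc v \<notin> F" if "Suc (Suc v) = n - 1"
      proof -
        have "Suc v = n - 2" using that by arith
        thus ?thesis using F(3) by simp
      qed
      ultimately show ?thesis unfolding blocked_def G by auto
    qed
    have "mx (n-2) G" using sub ntG bl by (auto simp: mx_def)
    moreover have "n - 2 - 1 \<in> G" using n3 G n by (auto simp: numeral_eq_Suc)
    ultimately show "G \<in> S1 (n-2) \<union> S2 (n-2)" by (auto simp: S1_def S2_def MS_def)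
  qed
  have "card (S1 n) = card (?f ` S1 n)" using inj by (simp add: card_image)
  also have "\<dots> \<le> card (S1 (n-2) \<union> S2 (n-2))"
    using img by (intro card_mono) (auto simp: S1_def S2_def intro: finite_subset[OF _ MS_fin])
  also have "\<dots> \<le> card (S1 (n-2)) + card (S2 (n-2))" by (rule card_Un_le)
  finally show ?thesis .
qed

lemma S2_card: assumes n: "n \<ge> 3" shows "card (S2 n) \<le> card (MS (n-3))"
proof -
  let ?f = "\<lambda>F. F - {n-1, n-2}"
  have inj: "inj_on ?f (S2 n)"
    by (rule inj_onI) (auto simp: S2_def)
  have img: "?f ` S2 n \<subseteq> MS (n-3)"
  proof
    fix G assume "G \<in> ?f ` S2 n"
    then obtain F where G: "G = F - {n-1, n-2}" and FS: "F \<in> S2 n" by blast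
    hence F: "mx n F" "n - 1 \<in> F" "n - 2 \<in> F" by (auto simp: S2_def MS_def)
    have n3: "n - 3 \<notin> F"
    proof
      assume "n - 3 \<in> F"
      moreover have "Suc (n-3) = n-2" "Suc (Suc (n-3)) = n-1" using n by auto
      ultimately show False using F unfolding mx_def nt_def by metis
    qed
    have sub: "G \<subseteq> {0..<n-3}"
    proof
      fix x assume "x\<in>G" hence "x<n" "x\<noteq>n-1" "x \<noteq> n-2" "x \<noteq> n-3" using F G n3 by (auto simp: mx_def)
      thus "x\<in>{0..<n-3}" by auto
    qed
    have ntG: "nt G" using F G nt_mono by (auto simp: mx_def)
    have bl: "blocked G v" if v: "v < n-3" "v \<notin> G" for v
    proof -
      have "v \<notin> F" using v G n by auto
      hence "blocked F v" using F v by (auto simp: mx_def)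
      moreover have "Suc v \<noteq> n-1" "v - 1 \<noteq> n - 1" "v - 2 \<noteq> n - 1" "Suc v \<noteq> n-2" "v - 1 \<noteq> n - 2" "v - 2 \<noteq> n - 2"
        "Suc (Suc v) \<noteq> n - 1" using v n by auto
      moreover have "Suc v \<notin> F" if "Suc (Suc v) = n - 2"
      proof -
        have "Suc v = n - 3" using that by arith
        thus ?thesis using n3 by simp
      qed
      ultimately show ?thesis unfolding blocked_def G by auto
    qed
    show "G \<in> MS (n-3)" using sub ntG bl by (auto simp: mx_def MS_def)
  qed
  have "card (S2 n) = card (?f ` S2 n)" using inj by (simp add: card_image)
  also have "\<dots> \<le> card (MS (n-3))"
    using img by (intro card_mono) (auto simp: MS_fin)
  finally show ?thesis .
qed

lemma S2_small: assumes "n \<ge> 1" "n < 3" shows "card (S2 n) \<le> 1"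
proof -
  have "S2 n \<subseteq> {{0..<n}}"
  proof
    fix F assume "F \<in> S2 n"
    hence F: "F \<subseteq> {0..<n}" "n-1 \<in> F" "n-2 \<in> F" by (auto simp: S2_def MS_def mx_def)
    have "{0..<n} \<subseteq> F"
    proof
      fix x assume "x \<in> {0..<n}"
      hence "x = n - 1 \<or> x = n - 2" using assms by auto
      thus "x \<in> F" using F by auto
    qed
    thus "F \<in> {{0..<n}}" using F by auto
  qed
  hence "card (S2 n) \<le> card {{0..<n}}" by (intro card_mono) auto
  thus ?thesis by simp
qed


function q :: "nat \<Rightarrow> nat \<Rightarrow> nat" where
  "q r n = (if r = 3 then (if n = 0 then 1 else q 0 n + q 1 n + q 2 n)
    else if r = 0 then (if n \<ge> 3 then q 2 (n-1) else 0)
    else if r = 1 then (if n \<ge> 3 then q 1 (n-2) + q 2 (n-2) else 0)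
    else if r = 2 then (if n \<ge> 3 then q 3 (n-3) else if n \<ge> 1 then 1 else 0)
    else 0)"
  by auto
termination
  by (relation "measure (\<lambda>(r,n). 4*n + (if r = 3 then 3 else r))") auto

declare q.simps[simp del]

lemma q3: "n \<ge> 1 \<Longrightarrow> q 3 n = q 0 n + q 1 n + q 2 n" by (simp add: q.simps)
lemma q0: "n \<ge> 3 \<Longrightarrow> q 0 n = q 2 (n-1)" by (simp add: q.simps)
lemma q1: "n \<ge> 3 \<Longrightarrow> q 1 n = q 1 (n-2) + q 2 (n-2)" by (simp add: q.simps)
lemma q2: "n \<ge> 3 \<Longrightarrow> q 2 n = q 3 (n-3)" by (simp add: q.simps)

lemma card_bound: "card (MS n) \<le> q 3 n \<and> (n \<ge> 1 \<longrightarrow> card (S0 n) \<le> q 0 n \<and> card (S1 n) \<le> q 1 n \<and> card (S2 n) \<le> q 2 n)"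
proof (induction n rule: less_induct)
  case (less n)
  show ?case
  proof (cases "n = 0")
    case True thus ?thesis using MS0 by (simp add: q.simps)
  next
    case False
    have parts: "card (S0 n) \<le> q 0 n \<and> card (S1 n) \<le> q 1 n \<and> card (S2 n) \<le> q 2 n"
    proof (cases "n < 3")
      case True
      thus ?thesis using False S0_small S1_small S2_small by (auto simp: q.simps)
    next
      case ge: False
      have a: "card (S0 n) \<le> q 0 n"
      proof -
        have "card (S0 n) \<le> card (S2 (n-1))"
          using S0_sub[of n] ge by (intro card_mono) (auto simp: S2_def intro: finite_subset[OF _ MS_fin])
        also have "\<dots> \<le> q 2 (n-1)" using less[of "n-1"] ge by auto
        finally show ?thesis using q0 ge by simp
      qed
      have b: "card (S1 n) \<le> q 1 n"
        using S1_card[of n] less[of "n-2"] ge q1[of n] by auto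
      have c: "card (S2 n) \<le> q 2 n"
        using S2_card[of n] less[of "n-3"] ge q2[of n] by auto
      show ?thesis using a b c by simp
    qed
    have "card (MS n) \<le> q 3 n" using MS_split[of n] parts False q3[of n] by simp
    thus ?thesis using parts by simp
  qed
qed

lemma qvals: "q 0 4 = 1" "q 1 4 = 1" "q 2 4 = 1" "q 0 5 = 1" "q 1 5 = 2" "q 2 5 = 1"
   "q 0 6 = 1" "q 1 6 = 2" "q 2 6 = 3" "q 3 1 = 1" "q 3 2 = 1" "q 3 3 = 3"
  by (simp_all add: q.simps)


lemma qbound: "n \<ge> 4 \<Longrightarrow> r < 3 \<Longrightarrow> real (q r n) \<le> (39/25)^n / 4"
proof (induction n arbitrary: r rule: less_induct)
  case (less n)
  let ?m = "39/25 :: real"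
  show ?case
  proof (cases "n \<le> 6")
    case True
    hence "n = 4 \<or> n = 5 \<or> n = 6" using less.prems by auto
    moreover have "r = 0 \<or> r = 1 \<or> r = 2" using less.prems by auto
    ultimately show ?thesis using qvals by (auto simp: eval_nat_numeral)
  next
    case False
    have pw: "?m ^ n = ?m ^ k * ?m ^ (n - k)" if "k \<le> n" for k
      using that by (metis le_add_diff_inverse power_add)
    have "r = 0 \<or> r = 1 \<or> r = 2" using less.prems by auto
    moreover have "real (q 0 n) \<le> ?m ^ n / 4"
    proof -
      have "real (q 0 n) = real (q 2 (n-1))" using q0[of n] False by simp
      also have "\<dots> \<le> ?m ^ (n-1) / 4" using less.IH[of "n-1" 2] False by simp
      also have "\<dots> \<le> ?m ^ n / 4" using pw[of 1] False by simp
      finally show ?thesis .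
    qed
    moreover have "real (q 1 n) \<le> ?m ^ n / 4"
    proof -
      have "real (q 1 n) = real (q 1 (n-2)) + real (q 2 (n-2))" using q1[of n] False by simp
      also have "\<dots> \<le> 2 * (?m ^ (n-2) / 4)"
      proof -
        have "real (q 1 (n-2)) \<le> ?m ^ (n-2) / 4" "real (q 2 (n-2)) \<le> ?m ^ (n-2) / 4"
          using less.IH[of "n-2" 1] less.IH[of "n-2" 2] False by auto
        thus ?thesis by linarith
      qed
      also have "\<dots> \<le> ?m ^ n / 4"
      proof -
        have e: "?m^n = 1521/625 * ?m^(n-2)" using pw[of 2] False by (simp add: power2_eq_square)
        have p: "0 \<le> ?m^(n-2)" by simp
        show ?thesis using e p by linarith
      qed
      finally show ?thesis .
    qed
    moreover have "real (q 2 n) \<le> ?m ^ n / 4"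
    proof -
      have "real (q 2 n) = real (q 0 (n-3)) + real (q 1 (n-3)) + real (q 2 (n-3))"
        using q2[of n] q3[of "n-3"] False by simp
      also have "\<dots> \<le> 3 * (?m ^ (n-3) / 4)"
      proof -
        have "real (q 0 (n-3)) \<le> ?m ^ (n-3) / 4" "real (q 1 (n-3)) \<le> ?m ^ (n-3) / 4" "real (q 2 (n-3)) \<le> ?m ^ (n-3) / 4"
          using less.IH[of "n-3" 0] less.IH[of "n-3" 1] less.IH[of "n-3" 2] False by auto
        thus ?thesis by linarith
      qed
      also have "\<dots> \<le> ?m ^ n / 4"
      proof -
        have e: "?m^n = 59319/15625 * ?m^(n-3)" using pw[of 3] False by (simp add: power3_eq_cube)
        have p: "0 \<le> ?m^(n-3)" by simp
        show ?thesis using e p by linarith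
      qed
      finally show ?thesis .
    qed
    ultimately show ?thesis by auto
  qed
qed

lemma q3bound: "n \<ge> 1 \<Longrightarrow> real (q 3 n) < 0.81 * (39/25)^n"
proof (cases "n \<ge> 4")
  case True
  assume "n \<ge> 1"
  have "real (q 3 n) = real (q 0 n) + real (q 1 n) + real (q 2 n)" using q3[of n] True by simp
  also have "\<dots> \<le> 3 * ((39/25)^n / 4)"
  proof -
    have "real (q 0 n) \<le> (39/25)^n / 4" "real (q 1 n) \<le> (39/25)^n / 4" "real (q 2 n) \<le> (39/25)^n / 4"
      using qbound[of n 0] qbound[of n 1] qbound[of n 2] True by auto
    thus ?thesis by linarith
  qed
  also have "\<dots> < 0.81 * (39/25)^n" by simp
  finally show ?thesis .
next
  case False
  assume "n \<ge> 1"
  hence "n = 1 \<or> n = 2 \<or> n = 3" using False by auto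
  thus ?thesis using qvals by (auto simp: eval_nat_numeral)
qed

lemma mu_le: "(39/25::real) ^ n \<le> 6 powr (real n / 4)"
proof -
  have m: "(39/25::real) \<le> 6 powr (1/4)"
  proof (rule ccontr)
    assume "\<not> ?thesis"
    hence "(6 powr (1/4)) ^ 4 < (39/25::real) ^ 4"
      by (intro power_strict_mono) auto
    moreover have "(6 powr (1/4::real)) ^ 4 = 6"
      by (simp add: powr_realpow[symmetric] powr_powr)
    ultimately show False by (simp add: eval_nat_numeral)
  qed
  have "(39/25::real) ^ n = (39/25) powr (real n)" by (simp add: powr_realpow)
  also have "\<dots> \<le> (6 powr (1/4)) powr (real n)" using m by (intro powr_mono2) auto
  also have "\<dots> = 6 powr (real n / 4)" by (simp add: powr_powr)
  finally show ?thesis .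
qed

theorem lemma2p5:
  fixes n :: nat
  assumes "n \<ge> 1"
  shows "real (num_max_dissociation_sets (path_vertices n) path_adj) < 0.81 * 6 powr (real n / 4)"
proof -
  have "num_max_dissociation_sets (path_vertices n) path_adj = card (MS n)"
    by (simp add: num_max_dissociation_sets_def path_vertices_def max_iff MS_def)
  also have "\<dots> \<le> q 3 n" using card_bound by blast
  finally have "real (num_max_dissociation_sets (path_vertices n) path_adj) \<le> real (q 3 n)" by simp
  also have "\<dots> < 0.81 * (39/25)^n" using q3bound assms by blast
  also have "\<dots> \<le> 0.81 * 6 powr (real n / 4)" using mu_le by simp
  finally show ?thesis .
qed

end
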